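(* There exists a simple tree $T$ such that $\mathcal{D}(\Delta_T)\ne\mathcal{D}(d_T(Q))$ while $\mathcal{D}(\Delta_T^{1/2})=\mathcal{D}(d_T^{1/2}(Q))$.
   Context: A simple graph $G=(\mathscr{V},\mathscr{E})$ has a countable vertex set $\mathscr{V}$, symmetric edge weights $\mathscr{E}:\mathscr{V}\times\mathscr{V}\to\{0,1\}$, zero magnetic phase and vertex weight $m\equiv1$; it is assumed locally finite, connected and without loops. A tree is a graph in which removing any single edge disconnects it. $\Delta_T$ is the Friedrichs extension in $\ell^2(\mathscr{V})$ of the form $\frac12\sum_{x,y}\mathscr{E}(x,y)|f(x)-f(y)|^2$ on finitely supported functions; $d_T(x)=\sum_y\mathscr{E}(x,y)$ and $d_T(Q)$ is multiplication by it. *)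

theory Defs
  imports "HOL-Analysis.Analysis"
begin

text \<open>Graphs: vertex set V (a subset of nat, hence countable), edge relation E
  (E x y means the edge weight is 1).\<close>

definition graph_connected :: "nat set \<Rightarrow> (nat \<Rightarrow> nat \<Rightarrow> bool) \<Rightarrow> bool" where
  "graph_connected V E \<longleftrightarrow> V \<noteq> {} \<and> (\<forall>x\<in>V. \<forall>y\<in>V. E\<^sup>*\<^sup>* x y)"

definition simple_graph :: "nat set \<Rightarrow> (nat \<Rightarrow> nat \<Rightarrow> bool) \<Rightarrow> bool" where
  "simple_graph V E \<longleftrightarrow>
     (\<forall>x y. E x y \<longrightarrow> x \<in> V \<and> y \<in> V) \<and>
     (\<forall>x y. E x y \<longleftrightarrow> E y x) \<and>
     (\<forall>x. \<not> E x x) \<and>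
     (\<forall>x\<in>V. finite {y. E x y}) \<and>
     graph_connected V E"

definition simple_tree :: "nat set \<Rightarrow> (nat \<Rightarrow> nat \<Rightarrow> bool) \<Rightarrow> bool" where
  "simple_tree V E \<longleftrightarrow> simple_graph V E \<and>
     (\<forall>x y. E x y \<longrightarrow> \<not> graph_connected V (\<lambda>a b. E a b \<and> {a, b} \<noteq> {x, y}))"

definition deg :: "(nat \<Rightarrow> nat \<Rightarrow> bool) \<Rightarrow> nat \<Rightarrow> real" where
  "deg E x = real (card {y. E x y})"

definition l2 :: "nat set \<Rightarrow> (nat \<Rightarrow> real) \<Rightarrow> bool" where
  "l2 V f \<longleftrightarrow> (\<forall>x. x \<notin> V \<longrightarrow> f x = 0) \<and> (\<lambda>x. (f x)\<^sup>2) summable_on V"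

definition l2_inner :: "nat set \<Rightarrow> (nat \<Rightarrow> real) \<Rightarrow> (nat \<Rightarrow> real) \<Rightarrow> real" where
  "l2_inner V f g = (\<Sum>\<^sub>\<infinity>x\<in>V. f x * g x)"

definition l2_norm :: "nat set \<Rightarrow> (nat \<Rightarrow> real) \<Rightarrow> real" where
  "l2_norm V f = sqrt (\<Sum>\<^sub>\<infinity>x\<in>V. (f x)\<^sup>2)"

definition fin_supp :: "nat set \<Rightarrow> (nat \<Rightarrow> real) \<Rightarrow> bool" where
  "fin_supp V f \<longleftrightarrow> finite {x. f x \<noteq> 0} \<and> {x. f x \<noteq> 0} \<subseteq> V"

definition energy :: "nat set \<Rightarrow> (nat \<Rightarrow> nat \<Rightarrow> bool) \<Rightarrow> (nat \<Rightarrow> real) \<Rightarrow> (nat \<Rightarrow> real) \<Rightarrow> real" where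
  "energy V E f g = (\<Sum>\<^sub>\<infinity>(x, y)\<in>V \<times> V. (if E x y then (f x - f y) * (g x - g y) / 2 else 0))"

text \<open>Domain of the closure of the form defined on finitely supported functions
  (= form domain of the Friedrichs extension = \<open>D(\<Delta>\<^sub>T\<^sup>1\<^sup>/\<^sup>2)\<close>).\<close>
definition form_dom :: "nat set \<Rightarrow> (nat \<Rightarrow> nat \<Rightarrow> bool) \<Rightarrow> (nat \<Rightarrow> real) set" where
  "form_dom V E = {f. l2 V f \<and>
     (\<exists>\<phi> :: nat \<Rightarrow> nat \<Rightarrow> real.
        (\<forall>n. fin_supp V (\<phi> n)) \<and>
        (\<lambda>n. l2_norm V (\<lambda>x. \<phi> n x - f x)) \<longlonglongrightarrow> 0 \<and>
        (\<forall>\<epsilon>>0. \<exists>N. \<forall>m\<ge>N. \<forall>n\<ge>N.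
            energy V E (\<lambda>x. \<phi> m x - \<phi> n x) (\<lambda>x. \<phi> m x - \<phi> n x) < \<epsilon>))}"

text \<open>Domain of the Friedrichs extension: the operator associated with the closed form.\<close>
definition friedrichs_dom :: "nat set \<Rightarrow> (nat \<Rightarrow> nat \<Rightarrow> bool) \<Rightarrow> (nat \<Rightarrow> real) set" where
  "friedrichs_dom V E = {f \<in> form_dom V E.
     \<exists>g. l2 V g \<and> (\<forall>\<psi>\<in>form_dom V E. energy V E f \<psi> = l2_inner V g \<psi>)}"

definition deg_dom :: "nat set \<Rightarrow> (nat \<Rightarrow> nat \<Rightarrow> bool) \<Rightarrow> (nat \<Rightarrow> real) set" where
  "deg_dom V E = {f. l2 V f \<and> l2 V (\<lambda>x. deg E x * f x)}"

definition sqrt_deg_dom :: "nat set \<Rightarrow> (nat \<Rightarrow> nat \<Rightarrow> bool) \<Rightarrow> (nat \<Rightarrow> real) set" where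
  "sqrt_deg_dom V E = {f. l2 V f \<and> l2 V (\<lambda>x. sqrt (deg E x) * f x)}"

end

theory Submission
  imports Defs "HOL-Library.Discrete_Functions"
begin

definition par :: "nat \<Rightarrow> nat" where
  "par x = (if x \<le> 1 then 0 else 2 ^ floor_log (x - 1))"

definition EE :: "nat \<Rightarrow> nat \<Rightarrow> bool" where
  "EE x y \<longleftrightarrow> (x \<noteq> 0 \<and> par x = y) \<or> (y \<noteq> 0 \<and> par y = x)"

lemma par_0[simp]: "par 0 = 0" by (simp add: par_def)

lemma par_less: "x \<noteq> 0 \<Longrightarrow> par x < x"
proof -
  assume "x \<noteq> 0"
  show ?thesis
  proof (cases "x \<le> 1")
    case True then show ?thesis using \<open>x \<noteq> 0\<close> by (simp add: par_def)
  next
    case False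
    then have "2 ^ floor_log (x - 1) \<le> x - 1" by (intro floor_log_exp2_le) auto
    then show ?thesis using False by (simp add: par_def)
  qed
qed

lemma par_le: "par x \<le> x"
proof (cases "x = 0")
  case False then show ?thesis using par_less[of x] by simp
qed simp

lemma par_ge: "x \<le> 2 * par x + 1"
proof (cases "x \<le> 1")
  case True then show ?thesis by (simp add: par_def)
next
  case False
  have "x - 1 < 2 * 2 ^ floor_log (x - 1)" by (rule floor_log_exp2_gt)
  then show ?thesis using False by (simp add: par_def)
qed

lemma EE_sym: "EE x y \<longleftrightarrow> EE y x" unfolding EE_def by auto

lemma EE_irrefl: "\<not> EE x x" unfolding EE_def using par_less[of x] by auto

lemma EE_bound: "EE x y \<Longrightarrow> y \<le> 2 * x + 1"
  using par_le[of x] par_ge[of y] unfolding EE_def by auto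

lemma par_pow: "par y = 0 \<or> (\<exists>j. par y = 2 ^ j)"
  by (auto simp: par_def)

lemma par_leaf: assumes "2 ^ k < x" "x < 2 ^ Suc k" shows "par x = 2 ^ k"
proof -
  have "(1::nat) \<le> 2 ^ k" by simp
  then have x2: "\<not> x \<le> 1" using assms by linarith
  have "floor_log (x - 1) = k"
    by (rule floor_log_eqI) (use assms x2 in auto)
  then show ?thesis using x2 by (simp add: par_def)
qed

lemma reach0: "EE\<^sup>*\<^sup>* x 0"
proof (induction x rule: less_induct)
  case (less x)
  show ?case
  proof (cases "x = 0")
    case False
    then have "EE x (par x)" by (simp add: EE_def)
    moreover have "EE\<^sup>*\<^sup>* (par x) 0" using less par_less[OF False] by blast
    ultimately show ?thesis by (rule converse_rtranclp_into_rtranclp)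
  qed simp
qed

lemma reach_sym: "EE\<^sup>*\<^sup>* x y \<Longrightarrow> EE\<^sup>*\<^sup>* y x"
proof (induction rule: rtranclp_induct)
  case (step y z)
  from step(2) have "EE z y" by (simp add: EE_sym)
  from converse_rtranclp_into_rtranclp[OF this step(3)] show ?case .
qed simp

lemma conn: "graph_connected UNIV EE"
  unfolding graph_connected_def
proof (intro conjI ballI)
  fix x y :: nat
  show "EE\<^sup>*\<^sup>* x y" using rtranclp_trans[OF reach0[of x] reach_sym[OF reach0[of y]]] .
qed simp

lemma nbr_finite: "finite {y. EE x y}"
  by (rule finite_subset[of _ "{..2*x+1}"]) (auto dest: EE_bound)

lemma cut_edge:
  assumes "x \<noteq> 0"
  shows "\<not> graph_connected UNIV (\<lambda>a b. EE a b \<and> {a, b} \<noteq> {x, par x})"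
proof
  let ?E = "\<lambda>a b. EE a b \<and> {a, b} \<noteq> {x, par x}"
  define D where "D = {z. \<exists>k. (par ^^ k) z = x}"
  assume "graph_connected UNIV ?E"
  then have r: "?E\<^sup>*\<^sup>* x 0" unfolding graph_connected_def by blast
  have "\<And>w. ?E\<^sup>*\<^sup>* x w \<Longrightarrow> w \<in> D"
  proof -
    fix w assume "?E\<^sup>*\<^sup>* x w"
    then show "w \<in> D"
    proof (induction rule: rtranclp_induct)
      case base then show ?case unfolding D_def by (auto intro: exI[of _ 0])
    next
      case (step z w)
      then obtain k where k: "(par ^^ k) z = x" unfolding D_def by blast
      from step(2) have e: "EE z w" "{z, w} \<noteq> {x, par x}" by auto
      show ?case
      proof (cases "z \<noteq> 0 \<and> par z = w")
        case True
        show ?thesis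
        proof (cases k)
          case 0 then show ?thesis using k True e(2) by auto
        next
          case (Suc j)
          then have "(par ^^ j) (par z) = x" using k by (simp add: funpow_Suc_right del: funpow.simps)
          then show ?thesis using True unfolding D_def by auto
        qed
      next
        case False
        then have "par w = z" using e(1) by (auto simp: EE_def)
        then have "(par ^^ Suc k) w = x" using k by (simp add: funpow_Suc_right del: funpow.simps)
        then show ?thesis unfolding D_def by blast
      qed
    qed
  qed
  then have "0 \<in> D" using r by blast
  moreover have "\<And>k. (par ^^ k) 0 = 0" by (induct_tac k) auto
  ultimately show False using assms unfolding D_def by auto
qed

lemma tree: "simple_tree UNIV EE"
  unfolding simple_tree_def simple_graph_def
proof (intro conjI allI impI ballI)
  show "graph_connected UNIV EE" by (rule conn)
  fix x y assume "EE x y"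
  then show "\<not> graph_connected UNIV (\<lambda>a b. EE a b \<and> {a, b} \<noteq> {x, y})"
  proof (cases "x \<noteq> 0 \<and> par x = y")
    case True then show ?thesis using cut_edge by auto
  next
    case False
    then have "y \<noteq> 0" "par y = x" using \<open>EE x y\<close> by (auto simp: EE_def)
    then show ?thesis using cut_edge[of y] by (simp add: insert_commute)
  qed
next
  fix x y show "EE x y = EE y x" by (rule EE_sym)
next
  fix x show "\<not> EE x x" by (rule EE_irrefl)
next
  fix x show "finite {y. EE x y}" by (rule nbr_finite)
qed simp_all

lemma EE_cases: "EE x y \<Longrightarrow> (x \<noteq> 0 \<and> par x = y) \<noteq> (y \<noteq> 0 \<and> par y = x)"
  unfolding EE_def using par_less[of x] par_less[of y] by auto

lemma edge_sum:
  fixes w :: "nat \<Rightarrow> nat \<Rightarrow> real"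
  shows "(\<Sum>x\<le>m. \<Sum>y\<le>m. if EE x y then w x y else 0)
         = (\<Sum>x\<in>{..m}-{0}. w x (par x) + w (par x) x)"
proof -
  have split: "(if EE x y then w x y else 0) =
     (if x \<noteq> 0 \<and> par x = y then w x y else 0) + (if y \<noteq> 0 \<and> par y = x then w x y else 0)" for x y
    using EE_cases[of x y] unfolding EE_def by auto
  have s1: "(\<Sum>x\<le>m. \<Sum>y\<le>m. if x \<noteq> 0 \<and> par x = y then w x y else 0) = (\<Sum>x\<in>{..m}-{0}. w x (par x))"
  proof -
    have "(\<Sum>y\<le>m. if x \<noteq> 0 \<and> par x = y then w x y else 0) = (if x \<noteq> 0 then w x (par x) else 0)"
      if "x \<le> m" for x
      using that par_le[of x] by (auto simp: sum.delta)
    then have "(\<Sum>x\<le>m. \<Sum>y\<le>m. if x \<noteq> 0 \<and> par x = y then w x y else 0) = (\<Sum>x\<le>m. if x \<noteq> 0 then w x (par x) else 0)"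
      by (intro sum.cong) auto
    also have "\<dots> = (\<Sum>x\<in>{..m}-{0}. w x (par x))"
      by (rule sum.mono_neutral_cong_right) auto
    finally show ?thesis .
  qed
  have s2: "(\<Sum>x\<le>m. \<Sum>y\<le>m. if y \<noteq> 0 \<and> par y = x then w x y else 0) = (\<Sum>y\<in>{..m}-{0}. w (par y) y)"
  proof -
    have "(\<Sum>x\<le>m. \<Sum>y\<le>m. if y \<noteq> 0 \<and> par y = x then w x y else 0) = (\<Sum>y\<le>m. \<Sum>x\<le>m. if y \<noteq> 0 \<and> par y = x then w x y else 0)"
      by (rule sum.swap)
    also have "\<dots> = (\<Sum>y\<le>m. if y \<noteq> 0 then w (par y) y else 0)"
    proof (intro sum.cong refl)
      fix y assume "y \<in> {..m}"
      then show "(\<Sum>x\<le>m. if y \<noteq> 0 \<and> par y = x then w x y else 0) = (if y \<noteq> 0 then w (par y) y else 0)"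
        using par_le[of y] by (auto simp: sum.delta')
    qed
    also have "\<dots> = (\<Sum>y\<in>{..m}-{0}. w (par y) y)"
      by (rule sum.mono_neutral_cong_right) auto
    finally show ?thesis .
  qed
  show ?thesis
    by (simp only: split sum.distrib s1 s2)
qed

definition QA :: "nat \<Rightarrow> (nat \<Rightarrow> real) \<Rightarrow> real" where
  "QA m \<phi> = (\<Sum>x\<le>m. \<Sum>y\<le>m. if EE x y then (\<phi> x - \<phi> y) * (\<phi> x - \<phi> y) / 2 else 0)"

definition DA :: "nat \<Rightarrow> (nat \<Rightarrow> real) \<Rightarrow> real" where
  "DA m \<phi> = (\<Sum>x\<le>m. \<Sum>y\<le>m. if EE x y then (\<phi> x)\<^sup>2 else 0)"

lemma QA_eq: "QA m \<phi> = (\<Sum>x\<in>{..m}-{0}. (\<phi> x - \<phi> (par x))\<^sup>2)"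
  unfolding QA_def edge_sum by (intro sum.cong) (auto simp: power2_eq_square algebra_simps)

lemma DA_eq: "DA m \<phi> = (\<Sum>x\<in>{..m}-{0}. (\<phi> x)\<^sup>2 + (\<phi> (par x))\<^sup>2)"
  unfolding DA_def edge_sum by simp

lemma QA_le_DA: "QA m \<phi> \<le> 2 * DA m \<phi>"
proof -
  have "QA m \<phi> \<le> (\<Sum>x\<in>{..m}-{0}. 2 * ((\<phi> x)\<^sup>2 + (\<phi> (par x))\<^sup>2))"
    unfolding QA_eq
  proof (rule sum_mono)
    fix x
    have "0 \<le> (\<phi> x + \<phi> (par x))\<^sup>2" by simp
    then show "(\<phi> x - \<phi> (par x))\<^sup>2 \<le> 2 * ((\<phi> x)\<^sup>2 + (\<phi> (par x))\<^sup>2)"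
      by (simp add: power2_eq_square algebra_simps)
  qed
  then show ?thesis unfolding DA_eq by (simp add: sum_distrib_left)
qed

lemma DA_le: "DA m \<phi> \<le> 3 * (\<Sum>x\<le>m. (\<phi> x)\<^sup>2) + 2 * QA m \<phi>"
proof -
  have "DA m \<phi> \<le> (\<Sum>x\<in>{..m}-{0}. 3 * (\<phi> x)\<^sup>2 + 2 * (\<phi> x - \<phi> (par x))\<^sup>2)"
    unfolding DA_eq
  proof (rule sum_mono)
    fix x
    have "0 \<le> (2 * \<phi> x - \<phi> (par x))\<^sup>2" by simp
    then show "(\<phi> x)\<^sup>2 + (\<phi> (par x))\<^sup>2 \<le> 3 * (\<phi> x)\<^sup>2 + 2 * (\<phi> x - \<phi> (par x))\<^sup>2"
      by (simp add: power2_eq_square algebra_simps)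
  qed
  also have "\<dots> = 3 * (\<Sum>x\<in>{..m}-{0}. (\<phi> x)\<^sup>2) + 2 * QA m \<phi>"
    unfolding QA_eq by (simp add: sum.distrib sum_distrib_left)
  also have "(\<Sum>x\<in>{..m}-{0}. (\<phi> x)\<^sup>2) \<le> (\<Sum>x\<le>m. (\<phi> x)\<^sup>2)"
    by (rule sum_mono2) auto
  finally show ?thesis by simp
qed

lemma QA_nonneg: "0 \<le> QA m \<phi>"
  unfolding QA_eq by (intro sum_nonneg) auto

lemma QA_mono: "m \<le> m' \<Longrightarrow> QA m \<phi> \<le> QA m' \<phi>"
  unfolding QA_eq by (rule sum_mono2) auto

lemma DA_deg: "DA m \<phi> = (\<Sum>x\<le>m. (\<phi> x)\<^sup>2 * real (card {y. y \<le> m \<and> EE x y}))"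
  unfolding DA_def
proof (intro sum.cong refl)
  fix x
  have "(\<Sum>y\<le>m. if EE x y then (\<phi> x)\<^sup>2 else 0) = (\<Sum>y\<in>{y. y \<le> m \<and> EE x y}. (\<phi> x)\<^sup>2)"
    by (rule sum.mono_neutral_cong_right) auto
  then show "(\<Sum>y\<le>m. if EE x y then (\<phi> x)\<^sup>2 else 0) = (\<phi> x)\<^sup>2 * real (card {y. y \<le> m \<and> EE x y})"
    by simp
qed

lemma card_nbr: "2 * x + 1 \<le> m \<Longrightarrow> card {y. y \<le> m \<and> EE x y} = card {y. EE x y}"
  by (rule arg_cong[where f=card]) (auto dest: EE_bound)

lemma deg_nonneg: "0 \<le> deg EE x" by (simp add: deg_def)

lemma energy_QA:
  assumes "\<And>x. \<phi> x \<noteq> 0 \<Longrightarrow> 2 * x + 1 \<le> m"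
  shows "energy UNIV EE \<phi> \<phi> = QA m \<phi>"
proof -
  have "energy UNIV EE \<phi> \<phi> = (\<Sum>\<^sub>\<infinity>(x, y)\<in>{..m} \<times> {..m}. (if EE x y then (\<phi> x - \<phi> y) * (\<phi> x - \<phi> y) / 2 else 0))"
    unfolding energy_def
  proof (rule infsum_cong_neutral)
    fix p assume p: "p \<in> UNIV \<times> UNIV - {..m} \<times> {..m}"
    obtain x y where xy: "p = (x, y)" by (cases p)
    show "(case p of (x, y) \<Rightarrow> if EE x y then (\<phi> x - \<phi> y) * (\<phi> x - \<phi> y) / 2 else 0) = 0"
    proof (cases "EE x y")
      case True
      have "\<phi> x = 0"
      proof (rule ccontr)
        assume "\<phi> x \<noteq> 0"
        then have "2 * x + 1 \<le> m" by (rule assms)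
        moreover have "y \<le> 2 * x + 1" using True by (rule EE_bound)
        ultimately show False using p xy by auto
      qed
      moreover have "\<phi> y = 0"
      proof (rule ccontr)
        assume "\<phi> y \<noteq> 0"
        then have "2 * y + 1 \<le> m" by (rule assms)
        moreover have "x \<le> 2 * y + 1" using True EE_sym[of x y] EE_bound[of y x] by simp
        ultimately show False using p xy by auto
      qed
      ultimately have "\<phi> x = 0 \<and> \<phi> y = 0" by simp
      then show ?thesis using xy by simp
    qed (simp add: xy)
  qed auto
  also have "\<dots> = QA m \<phi>"
    unfolding QA_def by (simp add: sum.cartesian_product)
  finally show ?thesis .
qed

lemma infsum_nat_nonneg:
  fixes f :: "nat \<Rightarrow> real"
  assumes "\<And>n. 0 \<le> f n" "summable f"
  shows "infsum f UNIV = suminf f"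
proof -
  have "(f has_sum suminf f) UNIV"
    by (rule sums_nonneg_imp_has_sum_strong) (use assms in \<open>auto simp: summable_sums\<close>)
  then show ?thesis by (rule infsumI)
qed

lemma l2_iff: "l2 UNIV f \<longleftrightarrow> summable (\<lambda>x. (f x)\<^sup>2)"
  unfolding l2_def by (subst summable_on_UNIV_nonneg_real_iff) auto

lemma fs_summable:
  fixes g :: "'a \<Rightarrow> real"
  assumes "finite {x. g x \<noteq> 0}"
  shows "g summable_on A"
proof -
  have "g summable_on (A \<inter> {x. g x \<noteq> 0})" using assms by simp
  moreover have "g summable_on (A \<inter> {x. g x \<noteq> 0}) \<longleftrightarrow> g summable_on A"
    by (rule summable_on_cong_neutral) auto
  ultimately show ?thesis by simp
qed

lemma sum_le_infsum:
  fixes g :: "'a \<Rightarrow> real"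
  assumes "g summable_on UNIV" "\<And>x. 0 \<le> g x" "finite F"
  shows "sum g F \<le> infsum g UNIV"
proof -
  have "infsum g F \<le> infsum g UNIV"
    by (rule infsum_mono_neutral) (use assms in auto)
  then show ?thesis using assms(3) by simp
qed

lemma QA_le_energy:
  assumes "finite {x. \<psi> x \<noteq> 0}"
  shows "QA M \<psi> \<le> energy UNIV EE \<psi> \<psi>"
proof -
  obtain B where B: "\<And>x. \<psi> x \<noteq> 0 \<Longrightarrow> x < B"
    using assms finite_nat_bounded by blast
  let ?M = "max M (2 * B + 1)"
  have "energy UNIV EE \<psi> \<psi> = QA ?M \<psi>"
  proof (rule energy_QA)
    fix x assume "\<psi> x \<noteq> 0"
    then have "x < B" by (rule B)
    then show "2 * x + 1 \<le> ?M" by simp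
  qed
  moreover have "QA M \<psi> \<le> QA ?M \<psi>" by (rule QA_mono) simp
  ultimately show ?thesis by simp
qed

lemma energy_fs_nonneg_bound:
  assumes "\<And>x. \<psi> x \<noteq> 0 \<Longrightarrow> x < B"
  shows "energy UNIV EE \<psi> \<psi> \<le> 2 * (\<Sum>x<B. deg EE x * (\<psi> x)\<^sup>2)"
proof -
  let ?M = "2 * B + 1"
  have "energy UNIV EE \<psi> \<psi> = QA ?M \<psi>"
  proof (rule energy_QA)
    fix x assume "\<psi> x \<noteq> 0"
    then have "x < B" by (rule assms)
    then show "2 * x + 1 \<le> ?M" by simp
  qed
  also have "\<dots> \<le> 2 * DA ?M \<psi>" by (rule QA_le_DA)
  also have "DA ?M \<psi> \<le> (\<Sum>x<B. deg EE x * (\<psi> x)\<^sup>2)"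
  proof -
    have "DA ?M \<psi> = (\<Sum>x\<le>?M. (\<psi> x)\<^sup>2 * real (card {y. y \<le> ?M \<and> EE x y}))" by (rule DA_deg)
    also have "\<dots> = (\<Sum>x<B. (\<psi> x)\<^sup>2 * real (card {y. y \<le> ?M \<and> EE x y}))"
      by (rule sum.mono_neutral_right) (auto dest: assms)
    also have "\<dots> = (\<Sum>x<B. deg EE x * (\<psi> x)\<^sup>2)"
      by (intro sum.cong refl) (simp add: card_nbr deg_def)
    finally show ?thesis by simp
  qed
  finally show ?thesis by simp
qed

lemma sqrt_sq_l2: "l2 UNIV (\<lambda>x. sqrt (deg EE x) * f x) \<longleftrightarrow> summable (\<lambda>x. deg EE x * (f x)\<^sup>2)"
  unfolding l2_iff by (simp add: power_mult_distrib deg_nonneg)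

lemma sqrt_sub_form: "sqrt_deg_dom UNIV EE \<subseteq> form_dom UNIV EE"
proof
  fix f assume "f \<in> sqrt_deg_dom UNIV EE"
  then have lf: "l2 UNIV f" and sa: "summable (\<lambda>x. deg EE x * (f x)\<^sup>2)"
    unfolding sqrt_deg_dom_def by (auto simp: sqrt_sq_l2)
  let ?b = "\<lambda>x. (f x)\<^sup>2"
  let ?a = "\<lambda>x. deg EE x * (f x)\<^sup>2"
  have sb: "summable ?b" using lf l2_iff by blast
  define \<phi> where "\<phi> n x = (if x < n then f x else 0)" for n x
  have fs: "fin_supp UNIV (\<phi> n)" for n
    unfolding fin_supp_def \<phi>_def by (rule conjI, rule finite_subset[of _ "{..<n}"]) auto
  have tail: "l2_norm UNIV (\<lambda>x. \<phi> n x - f x) = sqrt (suminf ?b - (\<Sum>i<n. ?b i))" for n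
  proof -
    let ?t = "\<lambda>x. if x < n then 0 else ?b x"
    have eq: "(\<lambda>x. (\<phi> n x - f x)\<^sup>2) = ?t" by (auto simp: \<phi>_def)
    have st: "summable ?t"
      by (rule summable_comparison_test'[OF sb]) auto
    have "infsum ?t UNIV = suminf ?t" by (rule infsum_nat_nonneg) (use st in auto)
    also have "suminf ?t = (\<Sum>i. ?t (i + n)) + (\<Sum>i<n. ?t i)"
      by (rule suminf_split_initial_segment[OF st])
    also have "\<dots> = (\<Sum>i. ?b (i + n))" by simp
    also have "\<dots> = suminf ?b - (\<Sum>i<n. ?b i)"
      using suminf_split_initial_segment[OF sb, of n] by simp
    finally show ?thesis unfolding l2_norm_def eq by simp
  qed
  have conv: "(\<lambda>n. l2_norm UNIV (\<lambda>x. \<phi> n x - f x)) \<longlonglongrightarrow> 0"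
  proof -
    have "(\<lambda>n. suminf ?b - (\<Sum>i<n. ?b i)) \<longlonglongrightarrow> suminf ?b - suminf ?b"
      by (intro tendsto_diff tendsto_const summable_LIMSEQ sb)
    then have "(\<lambda>n. sqrt (suminf ?b - (\<Sum>i<n. ?b i))) \<longlonglongrightarrow> sqrt 0"
      by (intro tendsto_real_sqrt) simp
    then show ?thesis unfolding tail by simp
  qed
  have cauchy: "\<exists>N. \<forall>m\<ge>N. \<forall>n\<ge>N. energy UNIV EE (\<lambda>x. \<phi> m x - \<phi> n x) (\<lambda>x. \<phi> m x - \<phi> n x) < \<epsilon>"
    if "\<epsilon> > 0" for \<epsilon>
  proof -
    obtain N where N: "\<And>k l. k \<ge> N \<Longrightarrow> norm (sum ?a {k..<l}) < \<epsilon> / 2"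
      using sa \<open>\<epsilon> > 0\<close> unfolding summable_Cauchy by (meson half_gt_zero)
    show ?thesis
    proof (intro exI allI impI)
      fix m n assume mn: "m \<ge> N" "n \<ge> N"
      let ?lo = "min m n" and ?hi = "max m n"
      let ?\<psi> = "\<lambda>x. \<phi> m x - \<phi> n x"
      have supp: "?\<psi> x \<noteq> 0 \<Longrightarrow> ?lo \<le> x \<and> x < ?hi" for x
        by (auto simp: \<phi>_def split: if_splits)
      have "energy UNIV EE ?\<psi> ?\<psi> \<le> 2 * (\<Sum>x<?hi. deg EE x * (?\<psi> x)\<^sup>2)"
        by (rule energy_fs_nonneg_bound) (use supp in blast)
      also have "(\<Sum>x<?hi. deg EE x * (?\<psi> x)\<^sup>2) \<le> (\<Sum>x<?hi. if ?lo \<le> x then ?a x else 0)"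
      proof (rule sum_mono)
        fix x assume "x \<in> {..<?hi}"
        then show "deg EE x * (?\<psi> x)\<^sup>2 \<le> (if ?lo \<le> x then ?a x else 0)"
          using deg_nonneg[of x] by (auto simp: \<phi>_def)
      qed
      also have "(\<Sum>x<?hi. if ?lo \<le> x then ?a x else 0) = sum ?a {?lo..<?hi}"
        by (rule sum.mono_neutral_cong_right) auto
      also have "sum ?a {?lo..<?hi} < \<epsilon> / 2"
        using N[of ?lo ?hi] mn by simp
      finally show "energy UNIV EE ?\<psi> ?\<psi> < \<epsilon>" by simp
    qed
  qed
  show "f \<in> form_dom UNIV EE"
    unfolding form_dom_def using lf fs conv cauchy by blast
qed

lemma sq_summable_diff:
  fixes f g :: "nat \<Rightarrow> real"
  assumes "(\<lambda>x. (f x)\<^sup>2) summable_on UNIV" "(\<lambda>x. (g x)\<^sup>2) summable_on UNIV"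
  shows "(\<lambda>x. (f x - g x)\<^sup>2) summable_on UNIV"
proof (rule summable_on_comparison_test)
  show "(\<lambda>x. 2 * (f x)\<^sup>2 + 2 * (g x)\<^sup>2) summable_on UNIV"
    by (intro summable_on_add summable_on_cmult_right assms)
  fix x
  have "0 \<le> (f x + g x)\<^sup>2" by simp
  then show "(f x - g x)\<^sup>2 \<le> 2 * (f x)\<^sup>2 + 2 * (g x)\<^sup>2"
    by (simp add: power2_eq_square algebra_simps)
qed simp

lemma pointwise_le_norm:
  fixes g :: "nat \<Rightarrow> real"
  assumes "(\<lambda>x. (g x)\<^sup>2) summable_on UNIV"
  shows "\<bar>g x\<bar> \<le> l2_norm UNIV g"
proof -
  have "sum (\<lambda>x. (g x)\<^sup>2) {x} \<le> infsum (\<lambda>x. (g x)\<^sup>2) UNIV"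
    by (rule sum_le_infsum) (use assms in auto)
  then have "sqrt ((g x)\<^sup>2) \<le> sqrt (infsum (\<lambda>x. (g x)\<^sup>2) UNIV)"
    by (intro real_sqrt_le_mono) simp
  then show ?thesis unfolding l2_norm_def by simp
qed

lemma QA_split: "QA M u \<le> 2 * QA M (\<lambda>x. u x - v x) + 2 * QA M v"
proof -
  have "QA M u \<le> (\<Sum>x\<in>{..M}-{0}. 2 * ((u x - v x) - (u (par x) - v (par x)))\<^sup>2 + 2 * (v x - v (par x))\<^sup>2)"
    unfolding QA_eq
  proof (rule sum_mono)
    fix x
    have "0 \<le> ((u x - u (par x)) - 2 * (v x - v (par x)))\<^sup>2" by simp
    then show "(u x - u (par x))\<^sup>2 \<le> 2 * ((u x - v x) - (u (par x) - v (par x)))\<^sup>2 + 2 * (v x - v (par x))\<^sup>2"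
      by (simp add: power2_eq_square algebra_simps)
  qed
  also have "\<dots> = 2 * QA M (\<lambda>x. u x - v x) + 2 * QA M v"
    unfolding QA_eq by (simp add: sum.distrib sum_distrib_left)
  finally show ?thesis .
qed

lemma form_sub_sqrt: "form_dom UNIV EE \<subseteq> sqrt_deg_dom UNIV EE"
proof
  fix f assume "f \<in> form_dom UNIV EE"
  then obtain \<phi> :: "nat \<Rightarrow> nat \<Rightarrow> real" where lf: "l2 UNIV f"
    and fs: "\<And>n. fin_supp UNIV (\<phi> n)"
    and conv: "(\<lambda>n. l2_norm UNIV (\<lambda>x. \<phi> n x - f x)) \<longlonglongrightarrow> 0"
    and cau: "\<And>\<epsilon>. \<epsilon> > 0 \<Longrightarrow> \<exists>N. \<forall>m\<ge>N. \<forall>n\<ge>N.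
            energy UNIV EE (\<lambda>x. \<phi> m x - \<phi> n x) (\<lambda>x. \<phi> m x - \<phi> n x) < \<epsilon>"
    unfolding form_dom_def by blast
  have fsq: "(\<lambda>x. (f x)\<^sup>2) summable_on UNIV" using lf unfolding l2_def by simp
  have fin: "finite {x. \<phi> n x \<noteq> 0}" for n using fs[of n] unfolding fin_supp_def by simp
  have psq: "(\<lambda>x. (\<phi> n x)\<^sup>2) summable_on UNIV" for n
    by (rule fs_summable, rule finite_subset[OF _ fin[of n]]) auto
  have pw: "(\<lambda>n. \<phi> n x) \<longlonglongrightarrow> f x" for x
  proof -
    have "(\<lambda>n. \<phi> n x - f x) \<longlonglongrightarrow> 0"
    proof (rule Lim_null_comparison[OF _ conv])
      show "\<forall>\<^sub>F n in sequentially. norm (\<phi> n x - f x) \<le> l2_norm UNIV (\<lambda>x. \<phi> n x - f x)"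
        using pointwise_le_norm[OF sq_summable_diff[OF psq fsq]] by simp
    qed
    then have "(\<lambda>n. (\<phi> n x - f x) + f x) \<longlonglongrightarrow> 0 + f x"
      by (intro tendsto_add tendsto_const)
    then show ?thesis by simp
  qed
  obtain N where N: "\<And>m. m \<ge> N \<Longrightarrow>
      energy UNIV EE (\<lambda>x. \<phi> m x - \<phi> N x) (\<lambda>x. \<phi> m x - \<phi> N x) < 1"
    using cau[of 1] by (meson order_refl zero_less_one)
  define C where "C = 3 * infsum (\<lambda>x. (f x)\<^sup>2) UNIV + 4 + 4 * energy UNIV EE (\<phi> N) (\<phi> N)"
  have bound: "(\<Sum>x<K. deg EE x * (f x)\<^sup>2) \<le> C" for K
  proof -
    let ?M = "2 * K + 1"
    let ?L = "\<lambda>n. (\<Sum>x<K. deg EE x * (\<phi> n x)\<^sup>2)"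
    let ?R = "\<lambda>n. 3 * (\<Sum>x\<le>?M. (\<phi> n x)\<^sup>2) + (4 + 4 * energy UNIV EE (\<phi> N) (\<phi> N))"
    have LR: "?L n \<le> ?R n" if "n \<ge> N" for n
    proof -
      have "?L n = (\<Sum>x<K. (\<phi> n x)\<^sup>2 * real (card {y. y \<le> ?M \<and> EE x y}))"
        by (intro sum.cong refl) (simp add: card_nbr deg_def)
      also have "\<dots> \<le> (\<Sum>x\<le>?M. (\<phi> n x)\<^sup>2 * real (card {y. y \<le> ?M \<and> EE x y}))"
        by (rule sum_mono2) auto
      also have "\<dots> = DA ?M (\<phi> n)" by (simp add: DA_deg)
      also have "\<dots> \<le> 3 * (\<Sum>x\<le>?M. (\<phi> n x)\<^sup>2) + 2 * QA ?M (\<phi> n)" by (rule DA_le)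
      also have "QA ?M (\<phi> n) \<le> 2 * QA ?M (\<lambda>x. \<phi> n x - \<phi> N x) + 2 * QA ?M (\<phi> N)"
        by (rule QA_split)
      also have "QA ?M (\<lambda>x. \<phi> n x - \<phi> N x) \<le> energy UNIV EE (\<lambda>x. \<phi> n x - \<phi> N x) (\<lambda>x. \<phi> n x - \<phi> N x)"
        by (rule QA_le_energy, rule finite_subset[OF _ finite_UnI[OF fin[of n] fin[of N]]]) auto
      also have "\<dots> < 1" using N that by blast
      also have "QA ?M (\<phi> N) \<le> energy UNIV EE (\<phi> N) (\<phi> N)"
        by (rule QA_le_energy[OF fin])
      finally show ?thesis by simp
    qed
    have "?L \<longlonglongrightarrow> (\<Sum>x<K. deg EE x * (f x)\<^sup>2)"
      by (intro tendsto_sum tendsto_mult tendsto_const tendsto_power pw)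
    moreover have "?R \<longlonglongrightarrow> 3 * (\<Sum>x\<le>?M. (f x)\<^sup>2) + (4 + 4 * energy UNIV EE (\<phi> N) (\<phi> N))"
      by (intro tendsto_add tendsto_sum tendsto_mult tendsto_const tendsto_power pw)
    ultimately have "(\<Sum>x<K. deg EE x * (f x)\<^sup>2) \<le> 3 * (\<Sum>x\<le>?M. (f x)\<^sup>2) + (4 + 4 * energy UNIV EE (\<phi> N) (\<phi> N))"
      by (rule LIMSEQ_le) (use LR in \<open>auto intro: exI[of _ N]\<close>)
    also have "(\<Sum>x\<le>?M. (f x)\<^sup>2) \<le> infsum (\<lambda>x. (f x)\<^sup>2) UNIV"
      by (rule sum_le_infsum) (use fsq in auto)
    finally show ?thesis unfolding C_def by simp
  qed
  have "summable (\<lambda>x. deg EE x * (f x)\<^sup>2)"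
    by (rule summableI_nonneg_bounded[where x=C]) (use bound deg_nonneg in auto)
  then show "f \<in> sqrt_deg_dom UNIV EE"
    unfolding sqrt_deg_dom_def using lf sqrt_sq_l2 by blast
qed

definition lf :: "nat \<Rightarrow> bool" where "lf x \<longleftrightarrow> x \<noteq> 0 \<and> (\<forall>j. x \<noteq> 2 ^ j)"

definition f0 :: "nat \<Rightarrow> real" where "f0 x = (if lf x then 1 / real x else 0)"

lemma f0_nonneg: "0 \<le> f0 x" by (simp add: f0_def)

lemma deg_leaf: assumes "lf x" shows "deg EE x = 1"
proof -
  have "par y \<noteq> x" for y using par_pow[of y] assms unfolding lf_def by auto
  then have "{y. EE x y} = {par x}" using assms unfolding EE_def lf_def by auto
  then show ?thesis by (simp add: deg_def)
qed

lemma f0_l2: "l2 UNIV f0"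
  unfolding l2_iff
proof (rule summable_comparison_test'[OF inverse_power_summable[of 2]])
  fix n :: nat
  show "norm ((f0 n)\<^sup>2) \<le> inverse (real n ^ 2)"
    by (simp add: f0_def power_inverse divide_inverse)
qed simp


lemma f0_in_deg: "f0 \<in> deg_dom UNIV EE"
proof -
  have "(\<lambda>x. deg EE x * f0 x) = f0"
    by (rule ext) (simp add: f0_def deg_leaf)
  then show ?thesis unfolding deg_dom_def using f0_l2 by simp
qed

lemma pow_not_between: "2 ^ k < (x::nat) \<Longrightarrow> x < 2 ^ Suc k \<Longrightarrow> x \<noteq> 2 ^ j"
proof
  assume a: "2 ^ k < x" "x < 2 ^ Suc k" "x = 2 ^ j"
  then have "k < j" using power_strict_increasing_iff[of "2::nat" k j] by simp
  moreover have "j < Suc k" using a power_strict_increasing_iff[of "2::nat" j "Suc k"] by simp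
  ultimately show False by simp
qed

lemma delta_form: "(\<lambda>x. if x = h then 1 else 0) \<in> form_dom UNIV EE"
proof -
  let ?d = "\<lambda>x::nat. if x = h then 1 else (0::real)"
  have fin: "finite {x. ?d x \<noteq> 0}" by simp
  have l2d: "l2 UNIV ?d" unfolding l2_def by (auto intro: fs_summable)
  have z: "l2_norm UNIV (\<lambda>x. ?d x - ?d x) = 0" by (simp add: l2_norm_def)
  have dd: "(\<lambda>x. ?d x - ?d x) = (\<lambda>x. 0)" by simp
  have "(\<lambda>p. case p of (x, y) \<Rightarrow> if EE x y then ((0::real) - 0) * (0 - 0) / 2 else 0) = (\<lambda>_. 0)"
    by (auto simp: fun_eq_iff)
  then have "energy UNIV EE (\<lambda>x. 0) (\<lambda>x. 0) = 0" unfolding energy_def by simp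
  then have e: "energy UNIV EE (\<lambda>x. ?d x - ?d x) (\<lambda>x. ?d x - ?d x) = 0" unfolding dd .
  show ?thesis unfolding form_dom_def
    apply (simp only: mem_Collect_eq)
    apply (rule conjI[OF l2d])
    apply (rule exI[of _ "\<lambda>n. ?d"])
    using fin z e by (simp add: fin_supp_def)
qed

lemma energy_delta:
  assumes k: "k \<ge> 1"
  shows "energy UNIV EE f0 (\<lambda>x. if x = 2 ^ k then 1 else 0) \<le> - 1 / 8"
proof -
  let ?h = "2 ^ k :: nat"
  let ?d = "\<lambda>x::nat. if x = ?h then 1 else (0::real)"
  let ?u = "\<lambda>(x, y). if EE x y then (f0 x - f0 y) * (?d x - ?d y) / 2 else 0"
  let ?L = "{?h<..<2 ^ Suc k}"
  have fh: "f0 ?h = 0" by (simp add: f0_def lf_def)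
  have une: "?u p \<le> 0" for p
  proof -
    obtain x y where p: "p = (x, y)" by (cases p)
    show ?thesis using fh f0_nonneg[of x] f0_nonneg[of y] unfolding p
      by (auto simp: mult_le_0_iff)
  qed
  have supp: "{p. ?u p \<noteq> 0} \<subseteq> ({?h} \<union> {y. EE ?h y}) \<times> ({?h} \<union> {y. EE ?h y})"
  proof
    fix p assume "p \<in> {p. ?u p \<noteq> 0}"
    then obtain x y where p: "p = (x, y)" and ne: "?u (x, y) \<noteq> 0" by (cases p) auto
    then have "EE x y" "x = ?h \<or> y = ?h" by (auto split: if_splits)
    then show "p \<in> ({?h} \<union> {y. EE ?h y}) \<times> ({?h} \<union> {y. EE ?h y})"
      unfolding p using EE_sym[of x y] by auto
  qed
  have usum: "?u summable_on UNIV"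
    by (rule fs_summable, rule finite_subset[OF supp]) (simp add: nbr_finite)
  have "energy UNIV EE f0 ?d = infsum ?u UNIV" unfolding energy_def by simp
  also have "\<dots> \<le> infsum ?u ({?h} \<times> ?L)"
    by (rule infsum_mono_neutral[OF usum]) (use une in auto)
  also have "\<dots> = sum ?u ({?h} \<times> ?L)" by simp
  also have "\<dots> = (\<Sum>y\<in>?L. ?u (?h, y))"
    by (simp add: sum.cartesian_product[symmetric])
  also have "\<dots> \<le> (\<Sum>y\<in>?L. - 1 / (2 * 2 ^ Suc k))"
  proof (rule sum_mono)
    fix y assume y: "y \<in> ?L"
    then have b: "2 ^ k < y" "y < 2 ^ Suc k" by auto
    have py: "par y = ?h" by (rule par_leaf[OF b])
    have y0: "y \<noteq> 0" using b by auto
    have "lf y" using pow_not_between[OF b] y0 unfolding lf_def by auto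
    then have fy: "f0 y = 1 / real y" by (simp add: f0_def)
    have E: "EE ?h y" using py y0 by (simp add: EE_def)
    have yh: "y \<noteq> ?h" using b by simp
    have uv: "?u (?h, y) = - 1 / (2 * real y)" using E fh fy yh by simp
    have yle: "real y \<le> 2 ^ Suc k"
    proof -
      have "y \<le> 2 ^ Suc k" using b by simp
      then have "real y \<le> real (2 ^ Suc k)" by (simp only: of_nat_le_iff)
      then show ?thesis by simp
    qed
    have ypos: "real y > 0" using y0 by simp
    have "1 / (2 * 2 ^ Suc k) \<le> 1 / (2 * real y)"
      by (rule divide_left_mono) (use yle ypos in auto)
    then show "?u (?h, y) \<le> - 1 / (2 * 2 ^ Suc k)" unfolding uv by simp
  qed
  also have "\<dots> = real (card ?L) * (- 1 / (2 * 2 ^ Suc k))" by (rule sum_constant)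
  also have "card ?L = 2 ^ k - 1" by simp
  also have "real (2 ^ k - 1 :: nat) * (- 1 / (2 * 2 ^ Suc k)) \<le> - 1 / 8"
  proof -
    have p1: "(2::real) ^ k \<ge> 2" using k by (metis power_one_right power_increasing one_le_numeral)
    have "real (2 ^ k - 1 :: nat) = 2 ^ k - 1" by (simp add: of_nat_diff)
    moreover have "(2 ^ k - 1) / (2 * 2 ^ Suc k) \<ge> (1::real) / 8"
      using p1 by (simp add: divide_simps)
    ultimately show ?thesis by simp
  qed
  finally show ?thesis .
qed

lemma f0_not_fried: "f0 \<notin> friedrichs_dom UNIV EE"
proof
  assume "f0 \<in> friedrichs_dom UNIV EE"
  then obtain g where lg: "l2 UNIV g"
    and eq: "\<And>\<psi>. \<psi> \<in> form_dom UNIV EE \<Longrightarrow> energy UNIV EE f0 \<psi> = l2_inner UNIV g \<psi>"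
    unfolding friedrichs_dom_def by blast
  have gk: "g (2 ^ Suc k) \<le> - 1 / 8" for k
  proof -
    let ?h = "2 ^ Suc k :: nat"
    let ?d = "\<lambda>x::nat. if x = ?h then 1 else (0::real)"
    have "l2_inner UNIV g ?d = infsum (\<lambda>x. g x * ?d x) {?h}"
      unfolding l2_inner_def by (rule infsum_cong_neutral) auto
    also have "\<dots> = g ?h" by simp
    finally have "g ?h = energy UNIV EE f0 ?d" using eq[OF delta_form] by simp
    also have "\<dots> \<le> - 1 / 8" by (rule energy_delta) simp
    finally show ?thesis .
  qed
  have gsq: "(\<lambda>x. (g x)\<^sup>2) summable_on UNIV" using lg unfolding l2_def by simp
  let ?S = "infsum (\<lambda>x. (g x)\<^sup>2) UNIV"
  obtain n :: nat where n: "real n > 64 * ?S" using reals_Archimedean2 by blast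
  let ?F = "(\<lambda>k. 2 ^ Suc k :: nat) ` {..<n}"
  have inj: "inj_on (\<lambda>k. 2 ^ Suc k :: nat) {..<n}"
    by (rule inj_onI) simp
  have "(\<Sum>k<n. (1::real) / 64) \<le> (\<Sum>k<n. (g (2 ^ Suc k))\<^sup>2)"
  proof (rule sum_mono)
    fix k
    have "1 / 8 \<le> \<bar>g (2 ^ Suc k)\<bar>" using gk[of k] by simp
    then have "(1/8)\<^sup>2 \<le> \<bar>g (2 ^ Suc k)\<bar>\<^sup>2" by (rule power_mono) simp
    then show "(1::real) / 64 \<le> (g (2 ^ Suc k))\<^sup>2" by (simp add: power2_eq_square)
  qed
  also have "\<dots> = sum (\<lambda>x. (g x)\<^sup>2) ?F" by (subst sum.reindex[OF inj]) (simp add: comp_def)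
  also have "\<dots> \<le> ?S" by (rule sum_le_infsum) (use gsq in auto)
  finally have "real n / 64 \<le> ?S" by simp
  then show False using n by simp
qed

theorem proposition4p8:
  shows "\<exists>(V :: nat set) (E :: nat \<Rightarrow> nat \<Rightarrow> bool).
           simple_tree V E \<and>
           friedrichs_dom V E \<noteq> deg_dom V E \<and>
           form_dom V E = sqrt_deg_dom V E"
proof (intro exI conjI)
  show "simple_tree UNIV EE" by (rule tree)
  show "friedrichs_dom UNIV EE \<noteq> deg_dom UNIV EE" using f0_in_deg f0_not_fried by blast
  show "form_dom UNIV EE = sqrt_deg_dom UNIV EE" using form_sub_sqrt sqrt_sub_form by blast
qed

end
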